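(* Let $A$ be a $\boldsymbol{\mathit{ba}\ell}$-algebra, $a\in A$ and $s\in\mathbb R$ with $a+s\ge0$. Then the set $\{rx_{\lnot I}\mid r\in\mathbb R,\ I\in{\sf Arch}(A),\ (a+s-r)^-\in I\}$ is bounded above in $D(\mathbb R[B])$ (by $\|a\|+s+1$), so its join exists there, and the element $$-s+\bigvee\{rx_{\lnot I}\mid r\in\mathbb R,\ I\in{\sf Arch}(A),\ (a+s-r)^-\in I\}$$ does not depend on the choice of $s$ with $a+s\ge 0$. Hence $\alpha:A\to D(\mathbb R[B])$ given by this formula is a well-defined map.
   Context: A $\boldsymbol{\mathit{ba}\ell}$-algebra is a commutative unital lattice-ordered algebra $A$ over $\mathbb R$ that is bounded (for every $a\in A$ there is an integer $n\ge1$ with $a\le n\cdot1$) and archimedean (if $na\le b$ for all $n\ge1$ then $a\le0$); reals $r$ are identified with $r\cdot1$. For $a\in A$: $a^+=a\vee0$, $a^-=(-a)\vee0$, $|a|=a\vee(-a)$, $\|a\|=\inf\{r\in\mathbb R\mid |a|\le r\}$. An $\ell$-ideal is a ring ideal $I$ with $|a|\le|b|$, $b\in I\Rightarrow a\in I$; it is archimedean if $A/I$ is archimedean. ${\sf Arch}(A)$ is the set of archimedean $\ell$-ideals ordered by inclusion; it is a bounded distributive lattice (indeed a frame) with meet $\cap$ and with join $I\vee J$ the least archimedean $\ell$-ideal containing $I\cup J$. $B$ is the free boolean extension of the bounded distributive lattice ${\sf Arch}(A)$ (a boolean algebra generated by ${\sf Arch}(A)$ as a bounded sublattice, such that every bounded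 lattice homomorphism from ${\sf Arch}(A)$ to a boolean algebra extends uniquely to a boolean homomorphism); ${\sf Arch}(A)\subseteq B$ and $\lnot$ denotes complement in $B$. For a boolean algebra $B$, $\mathbb R[B]$ is the quotient of the polynomial ring $\mathbb R[x_e\mid e\in B]$ by the ideal generated by $x_{e\wedge f}-x_ex_f$, $x_{e\vee f}-(x_e+x_f-x_ex_f)$, $x_{\lnot e}-(1-x_e)$, $x_0$ ($e,f\in B$); it is a $\boldsymbol{\mathit{ba}\ell}$-algebra and $e\mapsto x_e$ is a boolean isomorphism onto its idempotents. $D(\mathbb R[B])$ is its Dedekind completion: the (unique up to isomorphism) Dedekind complete $\boldsymbol{\mathit{ba}\ell}$-algebra containing $\mathbb R[B]$ as a $\boldsymbol{\mathit{ba}\ell}$-subalgebra such that each of its elements is a join of elements of $\mathbb R[B]$. *)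

theory Defs
  imports Complex_Main
begin

text \<open>A ba-l-algebra: a commutative unital lattice-ordered real algebra which is
  bounded (every element is below some n*1, n >= 1) and archimedean.
  Reals r are identified with of_real r = r *R 1.\<close>

class bal_algebra = comm_ring_1 + real_algebra_1 + lattice + ordered_ab_group_add +
  assumes bal_mult_nonneg: "0 \<le> a \<Longrightarrow> 0 \<le> b \<Longrightarrow> 0 \<le> a * b"
  and bal_scaleR_nonneg: "0 \<le> r \<Longrightarrow> 0 \<le> a \<Longrightarrow> 0 \<le> r *\<^sub>R a"
  and bal_bounded: "\<exists>n::nat. 1 \<le> n \<and> a \<le> of_nat n"
  and bal_archimedean: "(\<And>n::nat. 1 \<le> n \<Longrightarrow> of_nat n * a \<le> b) \<Longrightarrow> a \<le> 0"

definition pospart :: "'a::bal_algebra \<Rightarrow> 'a" where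
  "pospart a = sup a 0"

definition negpart :: "'a::bal_algebra \<Rightarrow> 'a" where
  "negpart a = sup (- a) 0"

definition labs :: "'a::bal_algebra \<Rightarrow> 'a" where
  "labs a = sup a (- a)"

definition bnorm :: "'a::bal_algebra \<Rightarrow> real" where
  "bnorm a = Inf {r::real. labs a \<le> of_real r}"

definition l_ideal :: "'a::bal_algebra set \<Rightarrow> bool" where
  "l_ideal I \<longleftrightarrow> 0 \<in> I \<and> (\<forall>u\<in>I. \<forall>v\<in>I. u + v \<in> I) \<and> (\<forall>u\<in>I. - u \<in> I)
     \<and> (\<forall>u\<in>I. \<forall>c. c * u \<in> I)
     \<and> (\<forall>u v. labs u \<le> labs v \<longrightarrow> v \<in> I \<longrightarrow> u \<in> I)"

text \<open>A/I is archimedean, written out: in A/I one has [u] <= [v] iff (u - v)^+ in I,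
  so "n[u] <= [v] for all n >= 1 implies [u] <= 0" reads as follows.\<close>
definition arch_ideal :: "'a::bal_algebra set \<Rightarrow> bool" where
  "arch_ideal I \<longleftrightarrow> l_ideal I \<and>
     (\<forall>u v. (\<forall>n::nat. 1 \<le> n \<longrightarrow> pospart (of_nat n * u - v) \<in> I) \<longrightarrow> pospart u \<in> I)"

definition Arch :: "'a::bal_algebra set set" where
  "Arch = {I. arch_ideal I}"

definition arch_join :: "'a::bal_algebra set \<Rightarrow> 'a set \<Rightarrow> 'a set" where
  "arch_join I J = \<Inter> {K \<in> Arch. I \<union> J \<subseteq> K}"

text \<open>e identifies Arch(A) with a bounded sublattice of the boolean algebra 'b
  which generates 'b as a boolean algebra.\<close>
definition free_boolean_extension :: "('a::bal_algebra set \<Rightarrow> 'b::boolean_algebra) \<Rightarrow> bool" where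
  "free_boolean_extension e \<longleftrightarrow>
     inj_on e Arch
     \<and> (\<forall>I\<in>Arch. \<forall>J\<in>Arch. e (I \<inter> J) = inf (e I) (e J))
     \<and> (\<forall>I\<in>Arch. \<forall>J\<in>Arch. e (arch_join I J) = sup (e I) (e J))
     \<and> e {0} = bot \<and> e UNIV = top
     \<and> (\<forall>S::'b set. e ` Arch \<subseteq> S \<and> bot \<in> S \<and> top \<in> S
          \<and> (\<forall>u\<in>S. \<forall>v\<in>S. inf u v \<in> S \<and> sup u v \<in> S) \<and> (\<forall>u\<in>S. - u \<in> S)
          \<longrightarrow> S = UNIV)"

text \<open>Elements of R[B], realised inside D via x: finite real combinations of the x_e.\<close>
definition RB_elems :: "('b \<Rightarrow> 'd::bal_algebra) \<Rightarrow> 'd set" where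
  "RB_elems x = {y. \<exists>F c. finite F \<and> y = (\<Sum>f\<in>F. c f *\<^sub>R x f)}"

text \<open>x : B -> D is injective and satisfies the defining relations of R[B]
  (so it induces an embedding of R[B] into D, whose image is RB_elems x, a
  sublattice), and every element of the Dedekind complete ba-l-algebra D is a
  join of elements of R[B].\<close>
definition dedekind_completion_RB ::
  "('b::boolean_algebra \<Rightarrow> 'd::{bal_algebra, conditionally_complete_lattice}) \<Rightarrow> bool" where
  "dedekind_completion_RB x \<longleftrightarrow>
     inj x
     \<and> (\<forall>u v. x (inf u v) = x u * x v)
     \<and> (\<forall>u v. x (sup u v) = x u + x v - x u * x v)
     \<and> (\<forall>u. x (- u) = 1 - x u)
     \<and> x bot = 0
     \<and> (\<forall>u\<in>RB_elems x. \<forall>v\<in>RB_elems x. sup u v \<in> RB_elems x \<and> inf u v \<in> RB_elems x)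
     \<and> (\<forall>d. \<exists>S. S \<subseteq> RB_elems x \<and> S \<noteq> {} \<and> bdd_above S \<and> d = Sup S)"

definition alpha_set :: "('a::bal_algebra set \<Rightarrow> 'b::boolean_algebra) \<Rightarrow> ('b \<Rightarrow> 'd::bal_algebra)
    \<Rightarrow> 'a \<Rightarrow> real \<Rightarrow> 'd set" where
  "alpha_set e x a s = {r *\<^sub>R x (- e I) | r I. I \<in> Arch \<and> negpart (a + of_real s - of_real r) \<in> I}"

end

theory Submission imports Defs "HOL-Library.Lattice_Algebras" begin

subclass (in bal_algebra) lattice_ab_group_add ..


lemma bal_zero_le_one: "0 \<le> (1::'a::bal_algebra)"
proof -
  obtain n::nat where n: "1 \<le> n" "0 \<le> (of_nat n::'a::bal_algebra)" using bal_bounded[of 0] by blast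
  have "(of_nat n::'a::bal_algebra) = real n *\<^sub>R 1" by (simp add: of_real_def[symmetric])
  have "0 \<le> (1 / real n) *\<^sub>R (of_nat n::'a::bal_algebra)" by (rule bal_scaleR_nonneg) (simp_all add: n)
  hence "0 \<le> (1 / real n) *\<^sub>R (real n *\<^sub>R (1::'a::bal_algebra))" using \<open>(of_nat n::'a::bal_algebra) = real n *\<^sub>R 1\<close> by simp
  moreover have "(1 / real n) *\<^sub>R (real n *\<^sub>R 1) = (1::'a::bal_algebra)"
    using n by simp
  ultimately show ?thesis by simp
qed

lemma bal_mult_left_mono: "0 \<le> c \<Longrightarrow> a \<le> b \<Longrightarrow> c * a \<le> c * (b::'a::bal_algebra)"
  using bal_mult_nonneg[of c "b - a"] by (simp add: right_diff_distrib)

lemma bal_scaleR_mono: "0 \<le> r \<Longrightarrow> a \<le> b \<Longrightarrow> r *\<^sub>R a \<le> r *\<^sub>R (b::'a::bal_algebra)"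
  using bal_scaleR_nonneg[of r "b - a"] by (simp add: scaleR_diff_right diff_ge_0_iff_ge)

lemma bal_scaleR_mono2: "r \<le> r' \<Longrightarrow> 0 \<le> a \<Longrightarrow> r *\<^sub>R a \<le> r' *\<^sub>R (a::'a::bal_algebra)"
  using bal_scaleR_nonneg[of "r' - r" a] by (simp add: scaleR_diff_left diff_ge_0_iff_ge)

lemma bal_of_real_mono: "r \<le> r' \<Longrightarrow> of_real r \<le> (of_real r' :: 'a::bal_algebra)"
  unfolding of_real_def using bal_scaleR_mono2 bal_zero_le_one by blast

lemma bal_of_real_le_iff: "(of_real r \<le> (of_real r' :: 'a::bal_algebra)) \<longleftrightarrow> r \<le> r'"
proof
  assume h: "of_real r \<le> (of_real r' :: 'a::bal_algebra)"
  show "r \<le> r'"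
  proof (rule ccontr)
    assume "\<not> r \<le> r'"
    hence "of_real r' \<le> (of_real r :: 'a::bal_algebra)" using bal_of_real_mono[of r' r] by simp
    hence "of_real r = (of_real r' :: 'a::bal_algebra)" using h by simp
    hence "r = r'" by simp
    thus False using \<open>\<not> r \<le> r'\<close> by simp
  qed
qed (rule bal_of_real_mono)

lemma disj_add: "0 \<le> a \<Longrightarrow> 0 \<le> b \<Longrightarrow> 0 \<le> c \<Longrightarrow> inf a c = 0 \<Longrightarrow> inf b c = 0
   \<Longrightarrow> inf (a + b) c = (0::'a::bal_algebra)"
proof -
  assume h: "0 \<le> a" "0 \<le> b" "0 \<le> c" "inf a c = 0" "inf b c = 0"
  have "inf (a + b) c \<le> inf (a + b) (c + b)" using h by (simp add: le_infI2)
  also have "\<dots> = b" using h add_inf_distrib_right[of a c b] by simp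
  finally have "inf (a + b) c \<le> inf b c" by simp
  moreover have "0 \<le> inf (a + b) c" using h by simp
  ultimately show ?thesis using h by simp
qed

lemma disj_nat: "0 \<le> a \<Longrightarrow> 0 \<le> b \<Longrightarrow> inf a b = 0 \<Longrightarrow> inf (of_nat n * a) b = (0::'a::bal_algebra) \<and> 0 \<le> of_nat n * a"
proof (induction n)
  case 0 thus ?case by (simp add: inf_absorb1)
next
  case (Suc n)
  thus ?case using disj_add[of a "of_nat n * a" b] by (simp add: algebra_simps)
qed

lemma disj_mult: "0 \<le> c \<Longrightarrow> 0 \<le> a \<Longrightarrow> 0 \<le> b \<Longrightarrow> inf a b = 0 \<Longrightarrow> inf (c * a) b = (0::'a::bal_algebra)"
proof -
  assume h: "0 \<le> c" "0 \<le> a" "0 \<le> b" "inf a b = 0"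
  obtain n::nat where n: "c \<le> of_nat n" using bal_bounded[of c] by blast
  have "c * a \<le> of_nat n * a" using bal_mult_left_mono[OF h(2) n] by (simp add: mult.commute)
  hence "inf (c * a) b \<le> inf (of_nat n * a) b" by (rule inf_mono) simp
  moreover have "0 \<le> inf (c * a) b" using h bal_mult_nonneg by simp
  ultimately show ?thesis using disj_nat[OF h(2,3,4)] by simp
qed

lemma disj_prod: "0 \<le> a \<Longrightarrow> 0 \<le> b \<Longrightarrow> inf a b = 0 \<Longrightarrow> a * b = (0::'a::bal_algebra)"
proof -
  assume h: "0 \<le> a" "0 \<le> b" "inf a b = 0"
  have "inf (b * a) b = 0" using disj_mult[OF h(2) h] .
  hence "inf b (b * a) = 0" by (simp add: inf_commute)
  hence "inf (a * b) (b * a) = 0" using disj_mult[OF h(1) h(2)] bal_mult_nonneg[OF h(2,1)] by simp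
  thus ?thesis by (simp add: mult.commute)
qed

lemma bal_square_nonneg: "0 \<le> (a::'a::bal_algebra) * a"
proof -
  define u where "u = pprt a"
  define v where "v = - nprt a"
  have a: "a = u - v" using prts[of a] by (simp add: u_def v_def)
  have u0: "0 \<le> u" and v0: "0 \<le> v" by (simp_all add: u_def v_def)
  have "inf u v = inf (u - v + v) (0 + v)" by simp
  also have "\<dots> = inf (u - v) 0 + v" by (rule add_inf_distrib_right[symmetric])
  also have "\<dots> = nprt a + v" using a by (simp add: nprt_def)
  also have "\<dots> = 0" by (simp add: v_def)
  finally have "u * v = 0" using disj_prod[OF u0 v0] by simp
  moreover have "(u - v) * (u - v) = u * u + v * v - (u * v + u * v)" by (simp add: algebra_simps)
  ultimately have "a * a = u * u + v * v" using a by simp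
  thus ?thesis using bal_mult_nonneg[OF u0 u0] bal_mult_nonneg[OF v0 v0] by (simp add: add_nonneg_nonneg)
qed

lemma x_facts:
  fixes x :: "'b::boolean_algebra \<Rightarrow> 'd::{bal_algebra, conditionally_complete_lattice}"
  assumes "dedekind_completion_RB x"
  shows "0 \<le> x u" "x u \<le> 1" "x (- u) = 1 - x u" "inf (x u) (x (- u)) = 0"
proof -
  have xi: "x (inf v w) = x v * x w" and xc: "x (- v) = 1 - x v" and xb: "x bot = 0" for v w
    using assms unfolding dedekind_completion_RB_def by auto
  have nn: "0 \<le> x v" for v
    using xi[of v v] bal_square_nonneg[of "x v"] by simp
  show "0 \<le> x u" by (rule nn)
  show "x (- u) = 1 - x u" by (rule xc)
  show "x u \<le> 1" using nn[of "- u"] xc[of u] by simp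
  define p where "p = x u"
  define q where "q = x (- u)"
  have pq: "p * q = 0" using xi[of u "- u"] xb by (simp add: p_def q_def)
  have p0: "0 \<le> p" and q0: "0 \<le> q" by (simp_all add: p_def q_def nn)
  define z where "z = inf p q"
  have z0: "0 \<le> z" using p0 q0 by (simp add: z_def)
  have "z = z * (p + q)" using xc[of u] by (simp add: p_def q_def)
  also have "\<dots> = p * z + q * z" by (simp add: algebra_simps)
  also have "\<dots> \<le> p * q + q * p"
    by (intro add_mono bal_mult_left_mono p0 q0) (simp_all add: z_def)
  also have "\<dots> = 0" using pq by (simp add: mult.commute)
  finally have "z = 0" using z0 by simp
  thus "inf (x u) (x (- u)) = 0" by (simp add: z_def p_def q_def)
qed

lemma labs_nonneg: "0 \<le> labs (u::'a::bal_algebra)"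
proof -
  have "0 \<le> labs u + labs u"
    using add_mono[OF sup_ge1[of u "- u"] sup_ge2[of "- u" u]] by (simp add: labs_def sup_commute)
  thus ?thesis by (metis zero_le_double_add_iff_zero_le_single_add)
qed

lemma zero_Arch: "{0::'a::bal_algebra} \<in> Arch"
proof -
  have l: "l_ideal {0::'a}"
    unfolding l_ideal_def
  proof (intro conjI ballI allI impI)
    fix u v :: 'a assume "labs u \<le> labs v" "v \<in> {0}"
    hence "labs u \<le> 0" by (simp add: labs_def)
    hence "labs u = 0" using labs_nonneg[of u] by simp
    thus "u \<in> {0}" by (simp add: labs_def)
  qed auto
  show ?thesis unfolding Arch_def arch_ideal_def
  proof (intro CollectI conjI l allI impI)
    fix u v :: 'a
    assume h: "\<forall>n::nat. 1 \<le> n \<longrightarrow> pospart (of_nat n * u - v) \<in> {0}"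
    have "u \<le> 0"
    proof (rule bal_archimedean)
      fix n :: nat assume "1 \<le> n"
      hence "sup (of_nat n * u - v) 0 = 0" using h by (simp add: pospart_def)
      hence "of_nat n * u - v \<le> 0" by (metis sup.orderI sup_ge1)
      thus "of_nat n * u \<le> v" by simp
    qed
    thus "pospart u \<in> {0}" by (simp add: pospart_def sup_absorb2)
  qed
qed

lemma bnorm_bound: "labs (a::'a::bal_algebra) \<le> of_real (bnorm a)"
proof -
  define S where "S = {r::real. labs a \<le> of_real r}"
  obtain n::nat where "labs a \<le> of_nat n" using bal_bounded[of "labs a"] by blast
  hence "real n \<in> S" by (simp add: S_def)
  hence ne: "S \<noteq> {}" by blast
  have bb: "bdd_below S"
  proof (rule bdd_belowI)
    fix r assume "r \<in> S"
    hence "of_real 0 \<le> (of_real r::'a)" using labs_nonneg[of a] by (simp add: S_def)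
    thus "0 \<le> r" using bal_of_real_le_iff by blast
  qed
  define b where "b = Inf S"
  have "labs a - of_real b \<le> 0"
  proof (rule bal_archimedean)
    fix n :: nat assume n: "1 \<le> n"
    hence "Inf S < b + 1 / real n" by (simp add: b_def)
    then obtain r where r: "r \<in> S" "r < b + 1 / real n" using cInf_lessD[OF ne] by blast
    have "labs a \<le> (of_real r :: 'a)" using r by (simp add: S_def)
    also have "(of_real r :: 'a) \<le> of_real (b + 1 / real n)"
      using bal_of_real_mono[of r "b + 1 / real n"] r(2) by (simp del: of_real_add)
    finally have "labs a \<le> (of_real (b + 1 / real n) :: 'a)" .
    hence "labs a - of_real b \<le> (of_real (1 / real n) :: 'a)" by (simp add: algebra_simps)
    moreover have "0 \<le> (of_nat n :: 'a)" using bal_of_real_mono[of 0 "real n"] by simp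
    ultimately have "of_nat n * (labs a - of_real b) \<le> of_nat n * (of_real (1 / real n) :: 'a)"
      using bal_mult_left_mono by blast
    also have "of_nat n * (of_real (1 / real n) :: 'a) = of_real (real n * (1 / real n))"
      by (metis of_real_mult of_real_of_nat_eq)
    also have "\<dots> = 1" using n by simp
    finally show "of_nat n * (labs a - of_real b) \<le> 1" .
  qed
  thus ?thesis by (simp add: b_def S_def bnorm_def)
qed

lemma neg_le_helper: "0 \<le> a + b \<Longrightarrow> - b \<le> (a::'a::ordered_ab_group_add)"
  using add_right_mono[of 0 "a + b" "- b"] by simp

lemma alpha_set_iff: "y \<in> alpha_set e x a s \<longleftrightarrow>
   (\<exists>r I. y = r *\<^sub>R x (- e I) \<and> I \<in> Arch \<and> negpart (a + of_real s - of_real r) \<in> I)"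
  by (auto simp: alpha_set_def)

lemma one_in_ideal: "I \<in> Arch \<Longrightarrow> (1::'a::bal_algebra) \<in> I \<Longrightarrow> I = UNIV"
proof -
  assume "I \<in> Arch" "1 \<in> I"
  hence "\<forall>c. c * 1 \<in> I" unfolding Arch_def arch_ideal_def l_ideal_def by blast
  thus "I = UNIV" by auto
qed

lemma part1:
  fixes a :: "'a::bal_algebra"
    and e :: "'a set \<Rightarrow> 'b::boolean_algebra"
    and x :: "'b \<Rightarrow> 'd::{bal_algebra, conditionally_complete_lattice}"
  assumes fe: "free_boolean_extension e"
    and dc: "dedekind_completion_RB x"
    and as: "0 \<le> a + of_real s"
  shows "alpha_set e x a s \<noteq> {}"
    and "\<forall>y\<in>alpha_set e x a s. y \<le> of_real (bnorm a + s + 1)"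
proof -
  have np0: "negpart (a + of_real s - of_real 0) = 0"
  proof -
    have h: "- (a + of_real s) \<le> 0" using as by (simp only: neg_le_0_iff_le)
    show ?thesis unfolding negpart_def of_real_0 diff_zero by (rule sup_absorb2[OF h])
  qed
  have "0 *\<^sub>R x (- e {0}) \<in> alpha_set e x a s"
    unfolding alpha_set_iff using zero_Arch np0 by blast
  thus "alpha_set e x a s \<noteq> {}" by blast
  define B where "B = bnorm a + s + 1"
  have "of_real (- s) \<le> a" using neg_le_helper[OF as] by simp
  also have "a \<le> labs a" by (simp add: labs_def)
  also have "labs a \<le> of_real (bnorm a)" by (rule bnorm_bound)
  finally have "- s \<le> bnorm a" using bal_of_real_le_iff by blast
  hence B0: "0 \<le> B" by (simp add: B_def)
  show "\<forall>y\<in>alpha_set e x a s. y \<le> of_real (bnorm a + s + 1)"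
  proof
    fix y assume "y \<in> alpha_set e x a s"
    then obtain r I where y: "y = r *\<^sub>R x (- e I)" and I: "I \<in> Arch"
      and ng: "negpart (a + of_real s - of_real r) \<in> I"
      unfolding alpha_set_iff by blast
    have p0: "0 \<le> x (- e I)" and p1: "x (- e I) \<le> 1" using x_facts[OF dc] by auto
    have OB: "0 \<le> (of_real B :: 'd)" using bal_of_real_mono[OF B0] by simp
    show "y \<le> of_real (bnorm a + s + 1)"
    proof (cases "r \<le> 0")
      case True
      hence "y \<le> 0 *\<^sub>R x (- e I)" unfolding y by (rule bal_scaleR_mono2[OF _ p0])
      thus ?thesis using OB by (simp add: B_def)
    next
      case False
      show ?thesis
      proof (cases "r \<le> B")
        case True
        have "y \<le> r *\<^sub>R 1" unfolding y using False by (intro bal_scaleR_mono p1) simp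
        also have "r *\<^sub>R (1::'d) \<le> of_real B" using bal_of_real_mono[OF True] by (simp add: of_real_def)
        finally show ?thesis by (simp add: B_def)
      next
        case rB: False
        define w where "w = a + of_real s - of_real r"
        have "(1::'a) = of_real 1" by simp
        also have "(of_real 1 :: 'a) \<le> of_real (r - bnorm a - s)"
          using rB by (intro bal_of_real_mono) (simp add: B_def)
        also have "(of_real (r - bnorm a - s) :: 'a) \<le> - w"
          using bnorm_bound[of a] sup_ge1[of a "- a"] by (simp add: w_def labs_def algebra_simps)
        also have "- w \<le> negpart w" by (simp add: negpart_def)
        finally have w1: "1 \<le> negpart w" .
        have nn: "0 \<le> negpart w" by (simp add: negpart_def)
        have "labs (negpart w) = negpart w"
          using nn by (simp add: labs_def sup_absorb1 order_trans[of "- negpart w" 0])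
        moreover have "labs (1::'a) = 1"
          using bal_zero_le_one[where 'a='a] by (simp add: labs_def sup_absorb1 order_trans[of "- 1" 0])
        ultimately have "labs 1 \<le> labs (negpart w)" using w1 by simp
        hence "(1::'a) \<in> I" using I ng unfolding Arch_def arch_ideal_def l_ideal_def w_def by blast
        hence "I = UNIV" using one_in_ideal I by blast
        hence "e I = top" using fe by (simp add: free_boolean_extension_def)
        hence "x (- e I) = 0" using dc by (simp add: dedekind_completion_RB_def)
        thus ?thesis using OB y by (simp add: B_def)
      qed
    qed
  qed
qed

lemma inf_scale_le:
  fixes p q :: "'d::bal_algebra"
  assumes "inf p q = 0" "0 \<le> m"
  shows "inf (m *\<^sub>R p) (m *\<^sub>R q) \<le> 0"
proof (cases "m = 0")
  case True thus ?thesis by simp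
next
  case False
  define w where "w = inf (m *\<^sub>R p) (m *\<^sub>R q)"
  have im: "0 \<le> 1 / m" using assms by simp
  have "(1 / m) *\<^sub>R w \<le> (1 / m) *\<^sub>R (m *\<^sub>R p)" unfolding w_def by (rule bal_scaleR_mono[OF im]) simp
  moreover have "(1 / m) *\<^sub>R w \<le> (1 / m) *\<^sub>R (m *\<^sub>R q)" unfolding w_def by (rule bal_scaleR_mono[OF im]) simp
  ultimately have "(1 / m) *\<^sub>R w \<le> inf p q" using False by simp
  hence "m *\<^sub>R ((1 / m) *\<^sub>R w) \<le> m *\<^sub>R 0" using assms bal_scaleR_mono by (metis scaleR_zero_right)
  thus ?thesis using False by (simp add: w_def)
qed

lemma shift:
  fixes a :: "'a::bal_algebra"
    and e :: "'a set \<Rightarrow> 'b::boolean_algebra"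
    and x :: "'b \<Rightarrow> 'd::{bal_algebra, conditionally_complete_lattice}"
  assumes fe: "free_boolean_extension e"
    and dc: "dedekind_completion_RB x"
    and as: "0 \<le> a + of_real s" and st: "s \<le> t"
  shows "Sup (alpha_set e x a t) = of_real (t - s) + Sup (alpha_set e x a s)"
proof -
  define d where "d = t - s"
  have d0: "0 \<le> d" using st by (simp add: d_def)
  have Od: "0 \<le> (of_real d :: 'a)" using bal_of_real_mono[OF d0] by simp
  have at: "0 \<le> a + of_real t"
  proof -
    have eq: "a + of_real t = (a + of_real s) + of_real d" by (simp add: d_def algebra_simps)
    show ?thesis unfolding eq by (rule add_nonneg_nonneg[OF as Od])
  qed
  define St where "St = alpha_set e x a t"
  define Ss where "Ss = alpha_set e x a s"
  have neS: "Ss \<noteq> {}" and neT: "St \<noteq> {}"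
    using part1(1)[OF fe dc as] part1(1)[OF fe dc at] by (simp_all add: Ss_def St_def)
  have bS: "bdd_above Ss" using part1(2)[OF fe dc as] unfolding Ss_def bdd_above_def by blast
  have bT: "bdd_above St" using part1(2)[OF fe dc at] unfolding St_def bdd_above_def by blast
  have le1: "Sup St \<le> of_real d + Sup Ss"
  proof (rule cSup_least[OF neT])
    fix y assume "y \<in> St"
    then obtain r I where y: "y = r *\<^sub>R x (- e I)" and I: "I \<in> Arch"
      and ng: "negpart (a + of_real t - of_real r) \<in> I"
      unfolding St_def alpha_set_iff by blast
    have "a + of_real s - of_real (r - d) = a + of_real t - of_real r"
      by (simp add: d_def algebra_simps)
    hence "(r - d) *\<^sub>R x (- e I) \<in> Ss" unfolding Ss_def alpha_set_iff using I ng by metis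
    hence A: "(r - d) *\<^sub>R x (- e I) \<le> Sup Ss" using cSup_upper[OF _ bS] by blast
    have B: "d *\<^sub>R x (- e I) \<le> d *\<^sub>R 1" using x_facts[OF dc] by (intro bal_scaleR_mono d0) auto
    have "y = (r - d) *\<^sub>R x (- e I) + d *\<^sub>R x (- e I)" by (simp add: y scaleR_diff_left)
    also have "\<dots> \<le> Sup Ss + d *\<^sub>R 1" using A B by (rule add_mono)
    finally show "y \<le> of_real d + Sup Ss" by (simp add: of_real_def add.commute)
  qed
  have le2: "Sup Ss \<le> Sup St - of_real d"
  proof (rule cSup_least[OF neS])
    fix y assume "y \<in> Ss"
    then obtain r I where y: "y = r *\<^sub>R x (- e I)" and I: "I \<in> Arch"
      and ng: "negpart (a + of_real s - of_real r) \<in> I"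
      unfolding Ss_def alpha_set_iff by blast
    define p where "p = x (- e I)"
    have p0: "0 \<le> p" using x_facts[OF dc] by (simp add: p_def)
    have pq: "inf p (1 - p) = 0"
      using x_facts(3,4)[OF dc, of "- e I"] by (simp add: p_def)
    have "a + of_real t - of_real (r + d) = a + of_real s - of_real r"
      by (simp add: d_def algebra_simps)
    hence "(r + d) *\<^sub>R p \<in> St" unfolding St_def alpha_set_iff p_def using I ng by metis
    hence m1: "(r + d) *\<^sub>R p \<le> Sup St" using cSup_upper[OF _ bT] by blast
    have np0: "negpart (a + of_real t - of_real d) = 0"
    proof -
      have eq: "a + of_real t - of_real d = a + of_real s" by (simp add: d_def algebra_simps)
      have h: "- (a + of_real s) \<le> 0" using as by (simp only: neg_le_0_iff_le)
      show ?thesis unfolding negpart_def eq by (rule sup_absorb2[OF h])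
    qed
    have x1: "x (- e {0}) = 1"
    proof -
      have "e {0} = bot" using fe by (simp add: free_boolean_extension_def)
      thus ?thesis using x_facts(3)[OF dc, of bot] dc by (simp add: dedekind_completion_RB_def)
    qed
    have "d *\<^sub>R x (- e {0}) \<in> St" unfolding St_def alpha_set_iff using zero_Arch np0 by blast
    hence m2: "of_real d \<le> Sup St" using x1 cSup_upper[OF _ bT] by (simp add: of_real_def)
    have key: "r *\<^sub>R p + of_real d \<le> sup (of_real d) ((r + d) *\<^sub>R p)"
    proof (cases "r \<le> 0")
      case True
      have "r *\<^sub>R p \<le> 0 *\<^sub>R p" using True p0 by (rule bal_scaleR_mono2)
      hence "r *\<^sub>R p + of_real d \<le> of_real d" by simp
      thus ?thesis by (rule le_supI1)
    next
      case False
      define m where "m = max r d"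
      have m0: "0 \<le> m" using d0 by (simp add: m_def)
      have i1: "r *\<^sub>R p \<le> m *\<^sub>R p" using p0 by (intro bal_scaleR_mono2) (simp add: m_def)
      have i2: "d *\<^sub>R (1 - p) \<le> m *\<^sub>R (1 - p)"
        using x_facts[OF dc, of "- e I"] by (intro bal_scaleR_mono2) (simp_all add: m_def p_def)
      have "inf (r *\<^sub>R p) (d *\<^sub>R (1 - p)) \<le> inf (m *\<^sub>R p) (m *\<^sub>R (1 - p))"
        using i1 i2 by (rule inf_mono)
      also have "\<dots> \<le> 0" using inf_scale_le[OF pq m0] .
      finally have ii: "inf (r *\<^sub>R p) (d *\<^sub>R (1 - p)) \<le> 0" .
      define Y where "Y = r *\<^sub>R p + of_real d"
      have "Y - sup (of_real d) ((r + d) *\<^sub>R p) = inf (Y - of_real d) (Y - (r + d) *\<^sub>R p)"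
        by (simp add: diff_sup_eq_inf add_inf_distrib_left)
      also have "Y - of_real d = r *\<^sub>R p" by (simp add: Y_def)
      also have "Y - (r + d) *\<^sub>R p = d *\<^sub>R (1 - p)"
        by (simp add: Y_def of_real_def scaleR_add_left scaleR_diff_right)
      finally have "Y - sup (of_real d) ((r + d) *\<^sub>R p) \<le> 0" using ii by simp
      hence "Y \<le> sup (of_real d) ((r + d) *\<^sub>R p)" by (simp only: diff_le_0_iff_le)
      thus ?thesis by (simp only: Y_def)
    qed
    also have "sup (of_real d) ((r + d) *\<^sub>R p) \<le> Sup St" using m1 m2 by simp
    finally show "y \<le> Sup St - of_real d" by (simp add: y p_def algebra_simps)
  qed
  from le1 le2 have "Sup St = of_real d + Sup Ss" by (simp add: algebra_simps)
  thus ?thesis by (simp add: St_def Ss_def d_def)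
qed


theorem mainTheorem5:
  fixes a :: "'a::bal_algebra"
    and e :: "'a set \<Rightarrow> 'b::boolean_algebra"
    and x :: "'b \<Rightarrow> 'd::{bal_algebra, conditionally_complete_lattice}"
  assumes "free_boolean_extension e"
    and "dedekind_completion_RB x"
  shows "(\<forall>s::real. 0 \<le> a + of_real s \<longrightarrow>
            alpha_set e x a s \<noteq> {} \<and> bdd_above (alpha_set e x a s)
            \<and> (\<forall>y\<in>alpha_set e x a s. y \<le> of_real (bnorm a + s + 1))
            \<and> (\<forall>y\<in>alpha_set e x a s. y \<le> Sup (alpha_set e x a s))
            \<and> (\<forall>u. (\<forall>y\<in>alpha_set e x a s. y \<le> u) \<longrightarrow> Sup (alpha_set e x a s) \<le> u))
       \<and> (\<forall>s t::real. 0 \<le> a + of_real s \<longrightarrow> 0 \<le> a + of_real t \<longrightarrow>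
            - of_real s + Sup (alpha_set e x a s) = - of_real t + Sup (alpha_set e x a t))"
proof (intro conjI allI impI)
  fix s :: real assume as: "0 \<le> a + of_real s"
  note p1 = part1[OF assms as]
  have bb: "bdd_above (alpha_set e x a s)" using p1(2) unfolding bdd_above_def by blast
  show "alpha_set e x a s \<noteq> {}" by (rule p1(1))
  show "bdd_above (alpha_set e x a s)" by (rule bb)
  show "\<forall>y\<in>alpha_set e x a s. y \<le> of_real (bnorm a + s + 1)" by (rule p1(2))
  show "\<forall>y\<in>alpha_set e x a s. y \<le> Sup (alpha_set e x a s)" using cSup_upper[OF _ bb] by blast
  fix u assume "\<forall>y\<in>alpha_set e x a s. y \<le> u"
  thus "Sup (alpha_set e x a s) \<le> u" using cSup_least[OF p1(1)] by blast
next
  fix s t :: real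
  assume as: "0 \<le> a + of_real s" and at: "0 \<le> a + of_real t"
  show "- of_real s + Sup (alpha_set e x a s) = - of_real t + Sup (alpha_set e x a t)"
  proof (cases "s \<le> t")
    case True
    show ?thesis using shift[OF assms as True] by (simp add: algebra_simps)
  next
    case False
    hence "t \<le> s" by simp
    show ?thesis using shift[OF assms at \<open>t \<le> s\<close>] by (simp add: algebra_simps)
  qed
qed

end
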